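(* Let $T\in\mathcal{L}(\mathcal{H})$ have closed range and let $n\ge1$. The following are equivalent: (1) $T$ is $n$-hypo-EP; (2) $T^n=T^\dagger T^{n+1}$; (3) $T^nT^\dagger=T^\dagger T^{n+1}T^\dagger$; (4) $(T^* )^n=(T^* )^nT^\dagger T$; (5) there is $c\ge0$ with $\|(T^* )^nx\|\le c\|Tx\|$ for all $x\in\mathcal{H}$; (6) there is $c\ge0$ with $\|(T^* )^nx\|\le c\|\omega(T)x\|$ for all $x\in\mathcal{H}$.
   Context: $\mathcal{H}$ is a Hilbert space, $\mathcal{L}(\mathcal{H})$ the bounded operators on it; $R(\cdot)$ denotes range. For $T$ with closed range, $T^\dagger$ is its Moore–Penrose inverse (unique solution of $TT^\dagger T=T$, $T^\dagger TT^\dagger=T^\dagger$, $(T^\dagger T)^*=T^\dagger T$, $(TT^\dagger)^*=TT^\dagger$), and $\omega(T)=T(T^*T)^\dagger=(T^\dagger)^*$ is its Cauchy dual. For $n\ge1$, $T$ is $n$-hypo-EP if $T$ has closed range and $R(T^n)\subset R(T^* )$. *)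

theory Defs
  imports "HOL-Analysis.Analysis"
begin

text \<open>Bounded operators on a (real) Hilbert space 'a, i.e. 'a::{real_inner, complete_space}.\<close>

definition op_pow :: "('a::real_normed_vector \<Rightarrow>\<^sub>L 'a) \<Rightarrow> nat \<Rightarrow> ('a \<Rightarrow>\<^sub>L 'a)" where
  "op_pow T n = ((\<lambda>S. T o\<^sub>L S) ^^ n) id_blinfun"

definition adj :: "('a::{real_inner,complete_space} \<Rightarrow>\<^sub>L 'a) \<Rightarrow> ('a \<Rightarrow>\<^sub>L 'a)" where
  "adj T = (THE S::'a \<Rightarrow>\<^sub>L 'a. \<forall>x y. inner (T x) y = inner x (S y))"

definition closed_range :: "('a::real_normed_vector \<Rightarrow>\<^sub>L 'a) \<Rightarrow> bool" where
  "closed_range T \<longleftrightarrow> closed (range (blinfun_apply T))"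

definition mp_inv :: "('a::{real_inner,complete_space} \<Rightarrow>\<^sub>L 'a) \<Rightarrow> ('a \<Rightarrow>\<^sub>L 'a)" where
  "mp_inv T = (THE S::'a \<Rightarrow>\<^sub>L 'a. T o\<^sub>L S o\<^sub>L T = T \<and> S o\<^sub>L T o\<^sub>L S = S
                 \<and> adj (S o\<^sub>L T) = S o\<^sub>L T \<and> adj (T o\<^sub>L S) = T o\<^sub>L S)"

text \<open>Cauchy dual omega(T) = T (T* T)^dagger.\<close>
definition cauchy_dual :: "('a::{real_inner,complete_space} \<Rightarrow>\<^sub>L 'a) \<Rightarrow> ('a \<Rightarrow>\<^sub>L 'a)" where
  "cauchy_dual T = T o\<^sub>L mp_inv (adj T o\<^sub>L T)"

definition hypo_EP :: "nat \<Rightarrow> ('a::{real_inner,complete_space} \<Rightarrow>\<^sub>L 'a) \<Rightarrow> bool" where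
  "hypo_EP n T \<longleftrightarrow> closed_range T \<and> range (blinfun_apply (op_pow T n)) \<subseteq> range (blinfun_apply (adj T))"

end

theory Submission
  imports Defs
begin

section \<open>Projection onto closed subspaces\<close>

lemma parallelogram_sq:
  fixes a b :: "'a::real_inner"
  shows "(norm (a - b))\<^sup>2 = 2 * (norm a)\<^sup>2 + 2 * (norm b)\<^sup>2 - 4 * (norm ((1/2) *\<^sub>R (a + b)))\<^sup>2"
  by (simp add: power2_norm_eq_inner inner_diff_left inner_diff_right inner_add_left inner_add_right
      inner_commute algebra_simps)

lemma proj_exists:
  fixes M :: "'a::{real_inner,complete_space} set"
  assumes sub: "subspace M" and cl: "closed M"
  shows "\<exists>m\<in>M. \<forall>u\<in>M. inner (x - m) u = 0"
proof -
  define d where "d = Inf ((\<lambda>m. (norm (x - m))\<^sup>2) ` M)"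
  have M0: "0 \<in> M" using sub by (simp add: subspace_0)
  have bdd: "bdd_below ((\<lambda>m. (norm (x - m))\<^sup>2) ` M)"
    by (rule bdd_belowI[where m=0]) auto
  have dle: "d \<le> (norm (x - m))\<^sup>2" if "m \<in> M" for m
    unfolding d_def using bdd that by (auto intro: cInf_lower)
  have approx: "\<exists>m\<in>M. (norm (x - m))\<^sup>2 < d + e" if "e > 0" for e
  proof -
    have "Inf ((\<lambda>m. (norm (x - m))\<^sup>2) ` M) < d + e" using that d_def by simp
    then show ?thesis using M0 by (subst (asm) cInf_less_iff) (auto simp: bdd)
  qed
  have "\<forall>k::nat. \<exists>m\<in>M. (norm (x - m))\<^sup>2 < d + 1 / (real k + 1)"
    using approx by simp
  then obtain s where sM: "\<And>k. s k \<in> M" and sd: "\<And>k. (norm (x - s k))\<^sup>2 < d + 1 / (real k + 1)"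
    by metis
  have close: "(norm (s a - s b))\<^sup>2 \<le> 2 / (real a + 1) + 2 / (real b + 1)" for a b
  proof -
    have mid: "(1/2) *\<^sub>R (s a + s b) \<in> M"
      using sM sub by (simp add: subspace_add subspace_scale)
    have hx: "(1/2::real) *\<^sub>R x + (1/2) *\<^sub>R x = x" by (simp flip: scaleR_add_left)
    have "x - (1/2) *\<^sub>R (s a + s b) = (1/2) *\<^sub>R ((x - s a) + (x - s b))"
      using hx by (simp add: algebra_simps)
    moreover have "s a - s b = (x - s b) - (x - s a)" by simp
    ultimately have "(norm (s a - s b))\<^sup>2 = 2 * (norm (x - s b))\<^sup>2 + 2 * (norm (x - s a))\<^sup>2
        - 4 * (norm (x - (1/2) *\<^sub>R (s a + s b)))\<^sup>2"
      using parallelogram_sq[of "x - s b" "x - s a"] by (simp add: add.commute)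
    then show ?thesis using dle[OF mid] sd[of a] sd[of b] by linarith
  qed
  have "Cauchy s"
  proof (rule metric_CauchyI)
    fix e :: real assume e: "e > 0"
    obtain N :: nat where N: "4 / e\<^sup>2 < real N + 1"
      using reals_Archimedean2[of "4 / e\<^sup>2"] by (metis add.commute add_strict_increasing zero_less_one less_imp_le)
    have "4 / (real N + 1) < e\<^sup>2"
      using N e by (simp add: field_simps)
    show "\<exists>N. \<forall>a\<ge>N. \<forall>b\<ge>N. dist (s a) (s b) < e"
    proof (intro exI allI impI)
      fix a b assume ab: "N \<le> a" "N \<le> b"
      have "2 / (real a + 1) \<le> 2 / (real N + 1)" "2 / (real b + 1) \<le> 2 / (real N + 1)"
        using ab by (auto intro!: divide_left_mono)
      with close[of a b] have "(norm (s a - s b))\<^sup>2 < e\<^sup>2" using \<open>4 / (real N + 1) < e\<^sup>2\<close> by linarith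
      then show "dist (s a) (s b) < e" using e by (simp add: dist_norm power_less_imp_less_base)
    qed
  qed
  then obtain m where lim: "s \<longlonglongrightarrow> m" using convergent_eq_Cauchy by blast
  have mM: "m \<in> M" using cl sM lim closed_sequentially by blast
  have "(\<lambda>k. (norm (x - s k))\<^sup>2) \<longlonglongrightarrow> (norm (x - m))\<^sup>2"
    by (intro tendsto_intros lim)
  moreover have "(\<lambda>k. 1 / (real k + 1)) \<longlonglongrightarrow> 0"
    using LIMSEQ_inverse_real_of_nat by (simp add: inverse_eq_divide add.commute)
  then have "(\<lambda>k. d + 1 / (real k + 1)) \<longlonglongrightarrow> d + 0"
    by (intro tendsto_intros)
  ultimately have mle: "(norm (x - m))\<^sup>2 \<le> d"
    using sd by (intro LIMSEQ_le[of _ _ "\<lambda>k. d + 1 / (real k + 1)"]) (auto intro: less_imp_le)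
  show ?thesis
  proof (intro bexI[OF _ mM] ballI)
    fix u assume uM: "u \<in> M"
    show "inner (x - m) u = 0"
    proof (cases "u = 0")
      case True then show ?thesis by simp
    next
      case False
      define c where "c = inner (x - m) u"
      define t where "t = c / inner u u"
      have uu: "inner u u > 0" using False by simp
      have "m + t *\<^sub>R u \<in> M" using mM uM sub by (simp add: subspace_add subspace_scale)
      then have "d \<le> (norm (x - (m + t *\<^sub>R u)))\<^sup>2" by (rule dle)
      also have "(norm (x - (m + t *\<^sub>R u)))\<^sup>2 = (norm (x - m))\<^sup>2 - 2 * t * c + t * t * inner u u"
        by (simp add: power2_norm_eq_inner c_def inner_diff_left inner_diff_right inner_add_left inner_add_right
            inner_commute algebra_simps)
      also have "\<dots> = (norm (x - m))\<^sup>2 - c * c / inner u u"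
        using uu by (simp add: t_def field_simps power2_eq_square)
      finally have "c * c / inner u u \<le> 0" using mle by linarith
      then have "c * c \<le> 0" using uu by (simp add: divide_le_0_iff)
      then show ?thesis unfolding c_def[symmetric] by (metis mult_eq_0_iff not_square_less_zero antisym_conv2 zero_le_square le_less)
    qed
  qed
qed


definition proj :: "'a::{real_inner,complete_space} set \<Rightarrow> 'a \<Rightarrow> 'a" where
  "proj M x = (SOME m. m \<in> M \<and> (\<forall>u\<in>M. inner (x - m) u = 0))"

locale csub =
  fixes M :: "'a::{real_inner,complete_space} set"
  assumes sub: "subspace M" and cl: "closed M"
begin

lemma proj_props: "proj M x \<in> M \<and> (\<forall>u\<in>M. inner (x - proj M x) u = 0)"
proof -
  have "\<exists>m. m \<in> M \<and> (\<forall>u\<in>M. inner (x - m) u = 0)" using proj_exists[OF sub cl, of x] by blast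
  then show ?thesis unfolding proj_def by (rule someI_ex)
qed

lemma proj_in: "proj M x \<in> M" using proj_props by blast
lemma proj_orth: "u \<in> M \<Longrightarrow> inner (x - proj M x) u = 0" using proj_props by blast

lemma proj_orth': "u \<in> M \<Longrightarrow> inner x u = inner (proj M x) u"
  using proj_orth[of u x] by (simp add: inner_diff_left)

lemma proj_unique:
  assumes "m \<in> M" "\<And>u. u \<in> M \<Longrightarrow> inner (x - m) u = 0"
  shows "proj M x = m"
proof -
  have d: "proj M x - m \<in> M" using assms(1) proj_in sub by (rule_tac subspace_diff) auto
  have e: "(x - m) - (x - proj M x) = proj M x - m" by simp
  have "inner (proj M x - m) (proj M x - m) = inner ((x - m) - (x - proj M x)) (proj M x - m)"
    by (simp only: e)
  also have "\<dots> = inner (x - m) (proj M x - m) - inner (x - proj M x) (proj M x - m)"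
    by (rule inner_diff_left)
  also have "\<dots> = 0" using assms(2)[OF d] proj_orth[OF d] by simp
  finally show ?thesis by simp
qed

lemma proj_id: "x \<in> M \<Longrightarrow> proj M x = x"
  by (rule proj_unique) auto

lemma proj_zero_iff_orth: "(\<forall>u\<in>M. inner x u = 0) \<Longrightarrow> proj M x = 0"
  by (rule proj_unique) (auto simp: sub subspace_0)

lemma proj_add: "proj M (x + y) = proj M x + proj M y"
proof (rule proj_unique)
  show "proj M x + proj M y \<in> M" using proj_in sub by (rule_tac subspace_add) auto
  fix u assume u: "u \<in> M"
  have e: "x + y - (proj M x + proj M y) = (x - proj M x) + (y - proj M y)" by simp
  show "inner (x + y - (proj M x + proj M y)) u = 0"
    unfolding e inner_add_left using proj_orth[OF u, of x] proj_orth[OF u, of y] by simp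
qed

lemma proj_scale: "proj M (c *\<^sub>R x) = c *\<^sub>R proj M x"
proof (rule proj_unique)
  show "c *\<^sub>R proj M x \<in> M" using proj_in sub by (rule_tac subspace_scale) auto
  fix u assume u: "u \<in> M"
  have e: "c *\<^sub>R x - c *\<^sub>R proj M x = c *\<^sub>R (x - proj M x)" by (simp add: scaleR_diff_right)
  show "inner (c *\<^sub>R x - c *\<^sub>R proj M x) u = 0"
    unfolding e inner_scaleR_left using proj_orth[OF u, of x] by simp
qed

lemma proj_orth2: "inner (y - proj M y) (proj M x) = 0"
  by (rule proj_orth[OF proj_in])

lemma proj_orth3: "inner (proj M x) (y - proj M y) = 0"
  by (subst inner_commute) (rule proj_orth2)

lemma proj_self_adj: "inner (proj M x) y = inner x (proj M y)"
proof -
  have "inner (proj M x) y = inner (proj M x) (proj M y + (y - proj M y))" by simp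
  also have "\<dots> = inner (proj M x) (proj M y) + inner (proj M x) (y - proj M y)"
    by (rule inner_add_right)
  also have "\<dots> = inner (proj M x) (proj M y)" by (simp only: proj_orth3 add_0_right)
  also have "\<dots> = inner (proj M x) (proj M y) + inner (x - proj M x) (proj M y)"
    by (simp only: proj_orth2 add_0_right)
  also have "\<dots> = inner (proj M x + (x - proj M x)) (proj M y)"
    by (rule inner_add_left[symmetric])
  also have "\<dots> = inner x (proj M y)" by simp
  finally show ?thesis .
qed

lemma proj_pyth: "(norm x)\<^sup>2 = (norm (x - proj M x))\<^sup>2 + (norm (proj M x))\<^sup>2"
proof -
  have "(norm ((x - proj M x) + proj M x))\<^sup>2 = (norm (x - proj M x))\<^sup>2 + (norm (proj M x))\<^sup>2"
    by (rule norm_add_Pythagorean) (unfold orthogonal_def, rule proj_orth2)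
  then show ?thesis by simp
qed

lemma proj_norm: "norm (proj M x) \<le> norm x"
proof (rule power2_le_imp_le)
  show "(norm (proj M x))\<^sup>2 \<le> (norm x)\<^sup>2" using proj_pyth[of x] zero_le_power2[of "norm (x - proj M x)"] zero_le_power2[of "norm (proj M x)"] by linarith
qed simp

lemma proj_compl_norm: "norm (x - proj M x) \<le> norm x"
proof (rule power2_le_imp_le)
  show "(norm (x - proj M x))\<^sup>2 \<le> (norm x)\<^sup>2" using proj_pyth[of x] zero_le_power2[of "norm (x - proj M x)"] zero_le_power2[of "norm (proj M x)"] by linarith
qed simp

end

section \<open>Riesz representation\<close>

lemma riesz:
  fixes f :: "'a::{real_inner,complete_space} \<Rightarrow> real"
  assumes f: "bounded_linear f"
  shows "\<exists>y. \<forall>x. f x = inner x y"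
proof (cases "\<forall>x. f x = 0")
  case True then show ?thesis by (intro exI[of _ 0]) simp
next
  case False
  then obtain z where fz: "f z \<noteq> 0" by blast
  interpret f: bounded_linear f by fact
  define K where "K = {x. f x = 0}"
  have subK: "subspace K" unfolding K_def subspace_def by (simp add: f.add f.scale f.zero)
  have clK: "closed K" unfolding K_def
    by (intro closed_Collect_eq continuous_on_const f.continuous_on continuous_on_id)
  interpret K: csub K using subK clK by unfold_locales
  define w where "w = z - proj K z"
  have fw: "f w = f z" using K.proj_in[of z] unfolding w_def K_def by (simp add: f.diff)
  have worth: "\<And>u. u \<in> K \<Longrightarrow> inner w u = 0" unfolding w_def by (rule K.proj_orth)
  have w0: "w \<noteq> 0" using fw fz f.zero by auto
  show ?thesis
  proof (intro exI allI)
    fix x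
    have "x - (f x / f w) *\<^sub>R w \<in> K" unfolding K_def using fw fz by (simp add: f.diff f.scale)
    then have "inner w (x - (f x / f w) *\<^sub>R w) = 0" by (rule worth)
    then have "inner x w = (f x / f w) * inner w w" by (simp add: inner_diff_right inner_commute)
    then show "f x = inner x ((f w / inner w w) *\<^sub>R w)"
      using w0 fw fz by (simp add: field_simps)
  qed
qed

section \<open>Adjoint\<close>

lemma inner_eq_all: assumes that: "\<And>x. inner x a = inner x (b::'a::real_inner)" shows "a = b"
proof -
  have "inner (a - b) (a - b) = 0" using that[of "a - b"] by (simp add: inner_diff_right)
  then show ?thesis by simp
qed

lemma adj_exists:
  fixes T :: "'a::{real_inner,complete_space} \<Rightarrow>\<^sub>L 'a"
  shows "\<exists>S::'a \<Rightarrow>\<^sub>L 'a. \<forall>x y. inner (T x) y = inner x (S y)"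
proof -
  have "\<forall>y. \<exists>s. \<forall>x. inner (T x) y = inner x s"
  proof
    fix y
    have "bounded_linear (\<lambda>x. inner (T x) y)"
      by (intro bounded_linear_compose[OF bounded_linear_inner_left] blinfun.bounded_linear_right)
    then show "\<exists>s. \<forall>x. inner (T x) y = inner x s" by (rule riesz)
  qed
  then obtain S where S: "\<And>x y. inner (T x) y = inner x (S y)" by metis
  have lin: "linear S"
  proof
    fix a b show "S (a + b) = S a + S b"
      by (rule inner_eq_all) (simp add: S[symmetric] inner_add_right)
  next
    fix c a show "S (c *\<^sub>R a) = c *\<^sub>R S a"
      by (rule inner_eq_all) (simp add: S[symmetric])
  qed
  have bnd: "norm (S y) \<le> norm T * norm y" for y
  proof -
    have "(norm (S y))\<^sup>2 = inner (T (S y)) y" by (simp add: S power2_norm_eq_inner)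
    also have "\<dots> \<le> norm (T (S y)) * norm y" using Cauchy_Schwarz_ineq2[of "T (S y)" y] abs_ge_self[of "inner (T (S y)) y"] by linarith
    also have "\<dots> \<le> norm T * norm (S y) * norm y" by (intro mult_right_mono norm_blinfun) simp
    finally have "norm (S y) * norm (S y) \<le> (norm T * norm y) * norm (S y)"
      by (simp add: power2_eq_square algebra_simps)
    then show ?thesis
      by (cases "S y = 0") (auto simp: mult_le_cancel_right)
  qed
  have "bounded_linear S"
    using lin bnd by (intro bounded_linear_intro[where K="norm T"]) (auto simp: linear_add linear_scale mult.commute)
  then show ?thesis
    by (intro exI[of _ "Blinfun S"]) (simp add: bounded_linear_Blinfun_apply S)
qed

lemma adj_inner: fixes T :: "'a::{real_inner,complete_space} \<Rightarrow>\<^sub>L 'a" shows "inner (T x) y = inner x (adj T y)"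
proof -
  obtain S :: "'a \<Rightarrow>\<^sub>L 'a" where S: "\<forall>x y. inner (T x) y = inner x (S y)" using adj_exists by blast
  have "adj T = S" unfolding adj_def
  proof (rule the_equality)
    show "\<forall>x y. inner (T x) y = inner x (S y)" by fact
    fix S' :: "'a \<Rightarrow>\<^sub>L 'a" assume S': "\<forall>x y. inner (T x) y = inner x (S' y)"
    show "S' = S"
    proof (rule blinfun_eqI, rule inner_eq_all)
      fix i x show "inner x (S' i) = inner x (S i)" using S S' by simp
    qed
  qed
  then show ?thesis using S by simp
qed

lemma adj_eqI: fixes T S :: "'a::{real_inner,complete_space} \<Rightarrow>\<^sub>L 'a" shows "(\<And>x y. inner (T x) y = inner x (S y)) \<Longrightarrow> adj T = S"
proof (rule blinfun_eqI, rule inner_eq_all)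
  fix i x assume h: "\<And>x y. inner (T x) y = inner x (S y)"
  show "inner x (adj T i) = inner x (S i)" using h[of x i] adj_inner[of T x i] by simp
qed

lemma adj_inner2: fixes T :: "'a::{real_inner,complete_space} \<Rightarrow>\<^sub>L 'a" shows "inner (adj T x) y = inner x (T y)"
proof -
  have "inner (adj T x) y = inner y (adj T x)" by (rule inner_commute)
  also have "\<dots> = inner (T y) x" by (rule adj_inner[symmetric])
  also have "\<dots> = inner x (T y)" by (rule inner_commute)
  finally show ?thesis .
qed

lemma adj_adj[simp]: fixes T :: "'a::{real_inner,complete_space} \<Rightarrow>\<^sub>L 'a" shows "adj (adj T) = T"
  by (rule adj_eqI) (simp add: adj_inner2)

lemma adj_comp: fixes A :: "'a::{real_inner,complete_space} \<Rightarrow>\<^sub>L 'a" shows "adj (A o\<^sub>L B) = adj B o\<^sub>L adj A"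
  by (rule adj_eqI) (simp add: adj_inner)

lemma adj_id[simp]: "adj id_blinfun = (id_blinfun :: 'a::{real_inner,complete_space} \<Rightarrow>\<^sub>L 'a)"
  by (rule adj_eqI) simp

lemma comp_assoc: "(A o\<^sub>L B) o\<^sub>L C = A o\<^sub>L (B o\<^sub>L C)"
  by (rule blinfun_eqI) simp


lemma baire_step:
  fixes T :: "'a::{real_inner,complete_space} \<Rightarrow>\<^sub>L 'a"
  assumes cl: "closed (range T)"
  shows "\<exists>N r. r > 0 \<and> (\<forall>y\<in>range T. norm y < r \<longrightarrow>
            (\<forall>e>0. \<exists>x. norm x < 2 * N \<and> norm (y - T x) < e))"
proof -
  define R where "R = range (blinfun_apply T)"
  define X where "X = top_of_set R"
  define F where "F = (\<lambda>k::nat. closure (T ` ball 0 (real k + 1)))"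
  have FR: "F k \<subseteq> R" for k
  proof -
    have "F k \<subseteq> closure R" unfolding F_def R_def by (intro closure_mono) auto
    then show ?thesis using cl R_def by simp
  qed
  have cX: "completely_metrizable_space X"
  proof -
    have "closedin euclidean R" using cl R_def closed_closedin by blast
    then show ?thesis unfolding X_def
      by (rule completely_metrizable_space_closedin[OF completely_metrizable_space_euclidean])
  qed
  have UF: "\<Union>(range F) = R"
  proof
    show "\<Union>(range F) \<subseteq> R" using FR by blast
    show "R \<subseteq> \<Union>(range F)"
    proof
      fix y assume "y \<in> R"
      then obtain x where y: "y = T x" unfolding R_def by blast
      obtain k :: nat where k0: "norm x < real k"
        using reals_Archimedean2[of "norm x"] by blast
      then have k: "norm x < real k + 1" by simp
      have "x \<in> ball 0 (real k + 1)" using k by simp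
      then have "y \<in> T ` ball 0 (real k + 1)" unfolding y by (rule imageI)
      then have "y \<in> F k" unfolding F_def using closure_subset[of "T ` ball 0 (real k + 1)"] by (rule rev_subsetD)
      then show "y \<in> \<Union>(range F)" by (rule UN_I[OF UNIV_I])
    qed
  qed
  have "\<exists>k. X interior_of F k \<noteq> {}"
  proof (rule ccontr)
    assume "\<not> ?thesis"
    then have h: "\<And>k. X interior_of F k = {}" by blast
    have "X interior_of \<Union>(range F) = {}"
    proof (rule Baire_category_alt)
      show "completely_metrizable_space X \<or> locally_compact_space X \<and> regular_space X" using cX by simp
      show "countable (range F)" by simp
      fix S assume "S \<in> range F"
      then obtain k where S: "S = F k" by blast
      have "closedin X (R \<inter> F k)" unfolding X_def F_def by (intro closedin_closed_Int) simp
      moreover have "R \<inter> F k = F k" using FR by blast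
      ultimately show "closedin X S \<and> X interior_of S = {}" using h S by simp
    qed
    moreover have "topspace X = R" unfolding X_def by simp
    moreover have "0 \<in> R" unfolding R_def by (metis blinfun.zero_right rangeI)
    ultimately have "X interior_of topspace X = {}" using UF by simp
    then have "topspace X = {}" using interior_of_topspace[of X] by blast
    then show False using \<open>0 \<in> R\<close> \<open>topspace X = R\<close> by blast
  qed
  then obtain k y0 where y0: "y0 \<in> X interior_of F k" by blast
  then obtain V where V: "openin X V" "y0 \<in> V" "V \<subseteq> F k" unfolding interior_of_def by blast
  then obtain W where W: "open W" "V = R \<inter> W" unfolding X_def openin_open by blast
  then obtain r where r: "r > 0" "ball y0 r \<subseteq> W" using V(2) open_contains_ball_eq by blast
  have inF: "y \<in> F k" if "y \<in> R" "dist y0 y < r" for y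
    using that r W V by auto
  define N where "N = real k + 1"
  have y0R: "y0 \<in> R" using V W by blast
  show ?thesis
  proof (rule exI[of _ N], rule exI[of _ r], intro conjI r(1) ballI allI impI)
    fix y e assume yR: "y \<in> range T" and ny: "norm y < r" and e: "(e::real) > 0"
    obtain u where u: "y = T u" using yR by blast
    obtain v where v: "y0 = T v" using y0R unfolding R_def by blast
    have "y0 + y = T (v + u)" using u v by (simp add: blinfun.add_right)
    then have "y0 + y \<in> R" unfolding R_def by blast
    then have a: "y0 + y \<in> F k" by (rule inF) (simp add: dist_norm ny)
    have b: "y0 \<in> F k" by (rule inF[OF y0R]) (simp add: r)
    obtain z1 where z1: "z1 \<in> T ` ball 0 N" "dist z1 (y0 + y) < e/2"
      using a e unfolding F_def N_def closure_approachable by (meson half_gt_zero)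
    obtain z2 where z2: "z2 \<in> T ` ball 0 N" "dist z2 y0 < e/2"
      using b e unfolding F_def N_def closure_approachable by (meson half_gt_zero)
    obtain x1 where x1: "norm x1 < N" "z1 = T x1" using z1(1) by auto
    obtain x2 where x2: "norm x2 < N" "z2 = T x2" using z2(1) by auto
    have "norm (x1 - x2) \<le> norm x1 + norm x2" by (rule norm_triangle_ineq4)
    then have nx: "norm (x1 - x2) < 2 * N" using x1 x2 by linarith
    have "y - T (x1 - x2) = ((y0 + y) - T x1) - (y0 - T x2)"
      by (simp add: blinfun.diff_right algebra_simps)
    then have "norm (y - T (x1 - x2)) \<le> norm ((y0 + y) - T x1) + norm (y0 - T x2)"
      by (metis norm_triangle_ineq4)
    also have "\<dots> < e" using z1(2) z2(2) x1 x2 by (simp add: dist_norm norm_minus_commute)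
    finally show "\<exists>x. norm x < 2 * N \<and> norm (y - T x) < e" using nx by blast
  qed
qed


lemma psum_diff:
  fixes f :: "nat \<Rightarrow> 'a::ab_group_add"
  assumes "m \<le> n"
  shows "sum f {..<n} - sum f {..<m} = sum f {m..<n}"
proof -
  have "sum f {0..<m} + sum f {m..<n} = sum f {0..<n}"
    using assms by (intro sum.atLeastLessThan_concat) auto
  then show ?thesis by (simp add: lessThan_atLeast0 algebra_simps)
qed

lemma summable_Cauchy_g:
  fixes f :: "nat \<Rightarrow> 'a::{real_normed_vector,complete_space}"
  assumes r: "\<And>e. e > 0 \<Longrightarrow> \<exists>N. \<forall>m\<ge>N. \<forall>n. norm (sum f {m..<n}) < e"
  shows "summable f"
  unfolding summable_iff_convergent Cauchy_convergent_iff[symmetric]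
proof (rule metric_CauchyI)
  fix e :: real assume e: "e > 0"
  obtain N where N: "\<And>m n. m \<ge> N \<Longrightarrow> norm (sum f {m..<n}) < e" using r[OF e] by blast
  have "dist (sum f {..<m}) (sum f {..<n}) < e" if "m \<ge> N" "n \<ge> N" for m n
  proof (cases "m \<le> n")
    case True
    have "dist (sum f {..<m}) (sum f {..<n}) = dist (sum f {..<n}) (sum f {..<m})"
      by (rule dist_commute)
    also have "\<dots> = norm (sum f {..<n} - sum f {..<m})" by (rule dist_norm)
    also have "\<dots> = norm (sum f {m..<n})" using psum_diff[OF True, of f] by simp
    finally have "dist (sum f {..<m}) (sum f {..<n}) = norm (sum f {m..<n})" .
    then show ?thesis using N[OF that(1)] by simp
  next
    case False
    then have "dist (sum f {..<m}) (sum f {..<n}) = norm (sum f {n..<m})"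
      using psum_diff[of n m f] False by (simp add: dist_norm)
    then show ?thesis using N[OF that(2)] by simp
  qed
  then show "\<exists>M. \<forall>m\<ge>M. \<forall>n\<ge>M. dist (sum f {..<m}) (sum f {..<n}) < e" by blast
qed

lemma summable_comparison_g:
  fixes f :: "nat \<Rightarrow> 'a::{real_normed_vector,complete_space}" and g :: "nat \<Rightarrow> real"
  assumes N: "\<And>n. norm (f n) \<le> g n" and g: "summable g"
  shows "summable f"
proof (rule summable_Cauchy_g)
  fix e :: real
  assume "0 < e"
  then obtain Ng where Ng: "\<And>m n. m \<ge> Ng \<Longrightarrow> norm (sum g {m..<n}) < e"
    using g unfolding summable_Cauchy by blast
  have "norm (sum f {m..<n}) < e" if "m \<ge> Ng" for m n
  proof -
    have "norm (sum f {m..<n}) \<le> sum g {m..<n}"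
      using N by (intro sum_norm_le) auto
    also have "\<dots> \<le> norm (sum g {m..<n})" by simp
    also have "\<dots> < e" using Ng that by blast
    finally show ?thesis .
  qed
  then show "\<exists>N. \<forall>m\<ge>N. \<forall>n. norm (sum f {m..<n}) < e" by blast
qed

lemma summable_norm_g:
  fixes f :: "nat \<Rightarrow> 'a::{real_normed_vector,complete_space}"
  assumes s: "summable (\<lambda>n. norm (f n))"
  shows "summable f" and "norm (suminf f) \<le> (\<Sum>n. norm (f n))"
proof -
  show sf: "summable f" by (rule summable_comparison_g[OF _ s]) simp
  have "(\<lambda>n. norm (\<Sum>i<n. f i)) \<longlonglongrightarrow> norm (suminf f)"
    by (intro tendsto_norm summable_LIMSEQ sf)
  moreover have "\<exists>N. \<forall>n\<ge>N. norm (\<Sum>i<n. f i) \<le> (\<Sum>n. norm (f n))"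
  proof (intro exI[of _ 0] allI impI)
    fix n :: nat
    have "norm (\<Sum>i<n. f i) \<le> (\<Sum>i<n. norm (f i))" by (rule norm_sum)
    also have "\<dots> \<le> (\<Sum>n. norm (f n))" by (rule sum_le_suminf[OF s]) auto
    finally show "norm (\<Sum>i<n. f i) \<le> (\<Sum>n. norm (f n))" .
  qed
  ultimately show "norm (suminf f) \<le> (\<Sum>n. norm (f n))" by (rule LIMSEQ_le_const2)
qed


lemma approx_step:
  fixes T :: "'a::{real_inner,complete_space} \<Rightarrow>\<^sub>L 'a"
  assumes cl: "closed (range T)"
  shows "\<exists>K>0. \<forall>y\<in>range T. \<exists>x. norm x \<le> K * norm y \<and> norm (y - T x) \<le> norm y / 2"
proof -
  obtain N r where r: "r > 0" and H: "\<And>y e. y \<in> range T \<Longrightarrow> norm y < r \<Longrightarrow> e > 0 \<Longrightarrow>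
      \<exists>x. norm x < 2 * N \<and> norm (y - T x) < e"
    using baire_step[OF cl] by blast
  have N0: "N > 0"
  proof -
    have "0 \<in> range T" using rangeI[of "blinfun_apply T" 0] by simp
    then have "\<exists>x. norm x < 2 * N \<and> norm (0 - T x) < 1" by (rule H) (use r in auto)
    then obtain x :: 'a where "norm x < 2 * N" by blast
    then show ?thesis using norm_ge_zero[of x] by linarith
  qed
  define K where "K = 4 * N / r"
  have K0: "K > 0" unfolding K_def using N0 r by simp
  show ?thesis
  proof (rule exI[of _ K], intro conjI K0 ballI)
    fix y assume yR: "y \<in> range T"
    show "\<exists>x. norm x \<le> K * norm y \<and> norm (y - T x) \<le> norm y / 2"
    proof (cases "y = 0")
      case True then show ?thesis by (intro exI[of _ 0]) simp
    next
      case False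
      then have ny: "norm y > 0" by simp
      define c where "c = r / (2 * norm y)"
      have c0: "c > 0" unfolding c_def using r ny by simp
      obtain u where u: "y = T u" using yR by blast
      have yR': "c *\<^sub>R y \<in> range T" unfolding u using rangeI[of "blinfun_apply T" "c *\<^sub>R u"] by (simp add: blinfun.scaleR_right)
      have "norm (c *\<^sub>R y) = r / 2" unfolding c_def using ny r by simp
      then have "norm (c *\<^sub>R y) < r" using r by simp
      moreover have "c * (norm y / 2) > 0" using c0 ny by simp
      ultimately obtain x' where x': "norm x' < 2 * N" "norm (c *\<^sub>R y - T x') < c * (norm y / 2)"
        using H[OF yR'] by blast
      define x where "x = (1 / c) *\<^sub>R x'"
      have "norm x = norm x' / c" unfolding x_def using c0 by simp
      also have "\<dots> \<le> 2 * N / c" using x'(1) c0 by (simp add: divide_right_mono)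
      also have "2 * N / c = K * norm y" unfolding K_def c_def using r ny by (simp add: field_simps)
      finally have nx: "norm x \<le> K * norm y" .
      have "y - T x = (1 / c) *\<^sub>R (c *\<^sub>R y - T x')"
        unfolding x_def using c0 by (simp add: blinfun.scaleR_right scaleR_diff_right)
      then have "norm (y - T x) = norm (c *\<^sub>R y - T x') / c" using c0 by simp
      also have "\<dots> \<le> norm y / 2" using x'(2) c0 by (simp add: divide_le_eq mult.commute)
      finally show ?thesis using nx by blast
    qed
  qed
qed

lemma open_mapping_range:
  fixes T :: "'a::{real_inner,complete_space} \<Rightarrow>\<^sub>L 'a"
  assumes cl: "closed (range T)"
  shows "\<exists>C. \<forall>y\<in>range T. \<exists>x. T x = y \<and> norm x \<le> C * norm y"
proof -
  obtain K where K0: "K > 0" and H: "\<forall>y\<in>range T. \<exists>x. norm x \<le> K * norm y \<and> norm (y - T x) \<le> norm y / 2"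
    using approx_step[OF cl] by blast
  from bchoice[OF H] obtain f where f: "\<And>y. y \<in> range T \<Longrightarrow> norm (f y) \<le> K * norm y \<and> norm (y - T (f y)) \<le> norm y / 2"
    by blast
  show ?thesis
  proof (rule exI[of _ "2 * K"], intro ballI)
    fix y assume yR: "y \<in> range T"
    define res where "res = rec_nat y (\<lambda>_ r. r - T (f r))"
    have res0: "res 0 = y" unfolding res_def by simp
    have resS: "res (Suc k) = res k - T (f (res k))" for k unfolding res_def by simp
    have resR: "res k \<in> range T" for k
    proof (induction k)
      case 0 then show ?case using yR res0 by simp
    next
      case (Suc k)
      from Suc obtain u where "res k = T u" by (rule rangeE)
      then have e: "res (Suc k) = T (u - f (res k))" unfolding resS by (simp add: blinfun.diff_right)
      have "T (u - f (res k)) \<in> range T" by (rule rangeI)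
      then show ?case unfolding e .
    qed
    have resN: "norm (res k) \<le> norm y / 2 ^ k" for k
    proof (induction k)
      case 0 then show ?case using res0 by simp
    next
      case (Suc k)
      have "norm (res (Suc k)) \<le> norm (res k) / 2" unfolding resS by (rule conjunct2[OF f[OF resR[of k]]])
      also have "\<dots> \<le> (norm y / 2 ^ k) / 2" using Suc by simp
      finally show ?case by simp
    qed
    define xs where "xs k = f (res k)" for k
    have xsN: "norm (xs k) \<le> K * norm y * (1/2) ^ k" for k
    proof -
      have "norm (xs k) \<le> K * norm (res k)" unfolding xs_def by (rule conjunct1[OF f[OF resR[of k]]])
      also have "\<dots> \<le> K * (norm y / 2 ^ k)" by (rule mult_left_mono[OF resN less_imp_le[OF K0]])
      also have "\<dots> = K * norm y * (1/2) ^ k" by (simp add: power_one_over)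
      finally show ?thesis .
    qed
    have geo: "summable (\<lambda>k. K * norm y * (1/2::real) ^ k)"
      by (intro summable_mult summable_geometric) simp
    have sn: "summable (\<lambda>k. norm (xs k))"
      by (rule summable_comparison_test[OF _ geo]) (use xsN in \<open>intro exI[of _ 0] allI impI, simp\<close>)
    have sx: "summable xs" by (rule summable_norm_g(1)[OF sn])
    define x where "x = suminf xs"
    have "(\<lambda>k. T (xs k)) sums T x"
      unfolding x_def by (rule bounded_linear.sums[OF blinfun.bounded_linear_right summable_sums[OF sx]])
    moreover have "(\<lambda>k. T (xs k)) sums y"
    proof -
      have ps: "(\<Sum>k<m. T (xs k)) = y - res m" for m
      proof (induction m)
        case 0 then show ?case using res0 by simp
      next
        case (Suc m) then show ?case by (simp add: resS xs_def)
      qed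
      have "(\<lambda>m. norm y / 2 ^ m) \<longlonglongrightarrow> 0"
        by (intro tendsto_divide_0[OF tendsto_const] filterlim_realpow_sequentially_gt1) simp
      moreover have "eventually (\<lambda>m. norm (res m) \<le> norm y / 2 ^ m) sequentially"
        using resN by (intro always_eventually allI)
      ultimately have "res \<longlonglongrightarrow> 0" by (rule Lim_null_comparison[rotated])
      then have "(\<lambda>m. y - res m) \<longlonglongrightarrow> y - 0" by (rule tendsto_diff[OF tendsto_const])
      then show ?thesis unfolding sums_def ps by simp
    qed
    ultimately have Tx: "T x = y" by (rule sums_unique2)
    have "norm x \<le> (\<Sum>k. norm (xs k))" unfolding x_def by (rule summable_norm_g(2)[OF sn])
    also have "\<dots> \<le> (\<Sum>k. K * norm y * (1/2::real) ^ k)"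
      by (rule suminf_le[OF xsN sn geo])
    also have "\<dots> = K * norm y * 2"
      by (subst suminf_mult) (simp_all add: suminf_geometric)
    finally have "norm x \<le> 2 * K * norm y" by (simp add: mult_ac)
    then show "\<exists>x. T x = y \<and> norm x \<le> 2 * K * norm y" using Tx by blast
  qed
qed


abbreviation penrose :: "('a::{real_inner,complete_space} \<Rightarrow>\<^sub>L 'a) \<Rightarrow> ('a \<Rightarrow>\<^sub>L 'a) \<Rightarrow> bool" where
  "penrose T X \<equiv> T o\<^sub>L X o\<^sub>L T = T \<and> X o\<^sub>L T o\<^sub>L X = X
                 \<and> adj (X o\<^sub>L T) = X o\<^sub>L T \<and> adj (T o\<^sub>L X) = T o\<^sub>L X"

lemma penrose_unique:
  fixes T X Y :: "'a::{real_inner,complete_space} \<Rightarrow>\<^sub>L 'a"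
  assumes X: "penrose T X" and Y: "penrose T Y"
  shows "X = Y"
proof -
  from X have X1: "T o\<^sub>L X o\<^sub>L T = T" and X2: "X o\<^sub>L T o\<^sub>L X = X"
    and X3: "adj (X o\<^sub>L T) = X o\<^sub>L T" and X4: "adj (T o\<^sub>L X) = T o\<^sub>L X" by auto
  from Y have Y1: "T o\<^sub>L Y o\<^sub>L T = T" and Y2: "Y o\<^sub>L T o\<^sub>L Y = Y"
    and Y3: "adj (Y o\<^sub>L T) = Y o\<^sub>L T" and Y4: "adj (T o\<^sub>L Y) = T o\<^sub>L Y" by auto
  have a: "adj T = adj T o\<^sub>L (T o\<^sub>L Y)"
  proof -
    have "adj T = adj (T o\<^sub>L Y o\<^sub>L T)" using Y1 by simp
    also have "\<dots> = adj T o\<^sub>L adj (T o\<^sub>L Y)" by (rule adj_comp)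
    finally show ?thesis using Y4 by simp
  qed
  have b: "adj T = (X o\<^sub>L T) o\<^sub>L adj T"
  proof -
    have "adj T = adj (T o\<^sub>L (X o\<^sub>L T))" using X1 by (simp add: comp_assoc)
    also have "\<dots> = adj (X o\<^sub>L T) o\<^sub>L adj T" by (rule adj_comp)
    finally show ?thesis using X3 by simp
  qed
  have "X = X o\<^sub>L (T o\<^sub>L X)" using X2 by (simp add: comp_assoc)
  also have "\<dots> = X o\<^sub>L adj (T o\<^sub>L X)" using X4 by simp
  also have "\<dots> = X o\<^sub>L (adj X o\<^sub>L adj T)" by (simp add: adj_comp)
  also have "\<dots> = X o\<^sub>L (adj X o\<^sub>L (adj T o\<^sub>L (T o\<^sub>L Y)))" using a by simp
  also have "\<dots> = X o\<^sub>L (adj (T o\<^sub>L X) o\<^sub>L (T o\<^sub>L Y))" by (simp add: adj_comp comp_assoc)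
  also have "\<dots> = (X o\<^sub>L T o\<^sub>L X) o\<^sub>L T o\<^sub>L Y" using X4 by (simp add: comp_assoc)
  also have "\<dots> = X o\<^sub>L T o\<^sub>L Y" using X2 by simp
  finally have XY: "X = X o\<^sub>L T o\<^sub>L Y" .
  have "Y = adj (Y o\<^sub>L T) o\<^sub>L Y" using Y2 Y3 by simp
  also have "\<dots> = adj T o\<^sub>L adj Y o\<^sub>L Y" by (simp add: adj_comp)
  also have "\<dots> = (X o\<^sub>L T) o\<^sub>L adj T o\<^sub>L adj Y o\<^sub>L Y" using b by simp
  also have "\<dots> = X o\<^sub>L T o\<^sub>L adj (Y o\<^sub>L T) o\<^sub>L Y" by (simp add: adj_comp comp_assoc)
  also have "\<dots> = X o\<^sub>L T o\<^sub>L (Y o\<^sub>L T o\<^sub>L Y)" using Y3 by (simp add: comp_assoc)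
  also have "\<dots> = X o\<^sub>L T o\<^sub>L Y" using Y2 by simp
  finally show ?thesis using XY by simp
qed

lemma mp_inv_eqI:
  fixes T X :: "'a::{real_inner,complete_space} \<Rightarrow>\<^sub>L 'a"
  assumes "penrose T X"
  shows "mp_inv T = X"
  unfolding mp_inv_def
proof (rule the_equality)
  show "penrose T X" by fact
  fix Y assume "penrose T Y"
  then show "Y = X" using penrose_unique assms by blast
qed

lemma mp_exists:
  fixes T :: "'a::{real_inner,complete_space} \<Rightarrow>\<^sub>L 'a"
  assumes cr: "closed_range T"
  shows "\<exists>X. penrose T X"
proof -
  have cl: "closed (range T)" using cr unfolding closed_range_def .
  define K where "K = {x. T x = 0}"
  define R where "R = range (blinfun_apply T)"
  have subK: "subspace K" unfolding K_def subspace_def by (simp add: blinfun.add_right blinfun.scaleR_right)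
  have clK: "closed K" unfolding K_def
    by (intro closed_Collect_eq continuous_on_const blinfun.continuous_on continuous_on_id)
  have subR: "subspace R" unfolding subspace_def
  proof (intro conjI ballI allI)
    show "0 \<in> R" unfolding R_def using rangeI[of "blinfun_apply T" 0] by simp
    fix x y assume "x \<in> R" "y \<in> R"
    then obtain u v where "x = T u" "y = T v" unfolding R_def by blast
    then have "x + y = T (u + v)" by (simp add: blinfun.add_right)
    then show "x + y \<in> R" unfolding R_def by (rule ssubst) (rule rangeI)
  next
    fix c x assume "x \<in> R"
    then obtain u where "x = T u" unfolding R_def by blast
    then have "c *\<^sub>R x = T (c *\<^sub>R u)" by (simp add: blinfun.scaleR_right)
    then show "c *\<^sub>R x \<in> R" unfolding R_def by (rule ssubst) (rule rangeI)
  qed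
  have clR: "closed R" using cl R_def by simp
  interpret K: csub K using subK clK by unfold_locales
  interpret R: csub R using subR clR by unfold_locales
  obtain C0 where C0: "\<And>y. y \<in> R \<Longrightarrow> \<exists>x. T x = y \<and> norm x \<le> C0 * norm y"
    using open_mapping_range[OF cl] unfolding R_def by blast
  define C where "C = max C0 0"
  have Cnn: "C \<ge> 0" unfolding C_def by simp
  have C: "\<exists>x. T x = y \<and> norm x \<le> C * norm y" if yR: "y \<in> R" for y
  proof -
    obtain x where "T x = y" "norm x \<le> C0 * norm y" using C0[OF yR] by blast
    moreover have "C0 * norm y \<le> C * norm y" unfolding C_def by (intro mult_right_mono) auto
    ultimately show ?thesis by (intro exI[of _ x]) simp
  qed
  define g where "g y = (SOME x. T x = proj R y \<and> norm x \<le> C * norm (proj R y))" for y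
  have g: "T (g y) = proj R y \<and> norm (g y) \<le> C * norm (proj R y)" for y
    unfolding g_def by (rule someI_ex) (rule C[OF R.proj_in])
  define S where "S y = g y - proj K (g y)" for y
  have key: "a - proj K a = b - proj K b" if "T a = T b" for a b
  proof -
    have "a - b \<in> K" unfolding K_def using that by (simp add: blinfun.diff_right)
    then have "proj K (a - b) = a - b" by (rule K.proj_id)
    moreover have "proj K (a - b) = proj K a - proj K b"
      using K.proj_add[of "a - b" b] by simp
    ultimately show ?thesis by (simp add: algebra_simps)
  qed
  have TK: "T (proj K x) = 0" for x using K.proj_in[of x] unfolding K_def by simp
  have TS: "T (S y) = proj R y" for y unfolding S_def using g[of y] TK by (simp add: blinfun.diff_right)
  have Sg: "S y = a - proj K a" if "T a = proj R y" for a y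
    unfolding S_def by (rule key) (simp add: g that)
  have lin: "linear S"
  proof
    fix y1 y2
    show "S (y1 + y2) = S y1 + S y2"
    proof -
      have "S (y1 + y2) = (g y1 + g y2) - proj K (g y1 + g y2)"
        by (rule Sg) (simp add: blinfun.add_right g R.proj_add)
      then show ?thesis unfolding S_def by (simp add: K.proj_add algebra_simps)
    qed
  next
    fix c y
    show "S (c *\<^sub>R y) = c *\<^sub>R S y"
    proof -
      have "S (c *\<^sub>R y) = c *\<^sub>R g y - proj K (c *\<^sub>R g y)"
        by (rule Sg) (simp add: blinfun.scaleR_right g R.proj_scale)
      then show ?thesis unfolding S_def by (simp add: K.proj_scale scaleR_diff_right)
    qed
  qed
  have bnd: "norm (S y) \<le> norm y * C" for y
  proof -
    have "norm (S y) \<le> norm (g y)" unfolding S_def by (rule K.proj_compl_norm)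
    also have "\<dots> \<le> C * norm (proj R y)" using g by blast
    also have "\<dots> \<le> C * norm y" using Cnn by (intro mult_left_mono R.proj_norm)
    finally show ?thesis by (simp add: mult.commute)
  qed
  have "bounded_linear S"
    using lin bnd by (intro bounded_linear_intro[where K=C]) (auto simp: linear_add linear_scale)
  then have SB: "blinfun_apply (Blinfun S) = S" by (rule bounded_linear_Blinfun_apply)
  define X where "X = Blinfun S"
  have XS: "X y = S y" for y unfolding X_def SB ..
  have TR: "T x \<in> R" for x unfolding R_def by (rule rangeI)
  have PT: "proj R (T x) = T x" for x by (rule R.proj_id[OF TR])
  have STx: "S (T x) = x - proj K x" for x
    by (rule Sg) (simp add: PT)
  have p1: "T o\<^sub>L X o\<^sub>L T = T"
    by (rule blinfun_eqI) (simp add: XS TS PT)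
  have p2: "X o\<^sub>L T o\<^sub>L X = X"
  proof (rule blinfun_eqI)
    fix y
    have "S (proj R y) = g y - proj K (g y)"
      by (rule Sg) (simp add: g R.proj_in R.proj_id)
    then have "S (T (S y)) = S y" unfolding TS by (simp add: S_def)
    then show "(X o\<^sub>L T o\<^sub>L X) y = X y" by (simp add: XS)
  qed
  have p3: "adj (X o\<^sub>L T) = X o\<^sub>L T"
  proof (rule adj_eqI)
    fix x y
    show "inner ((X o\<^sub>L T) x) y = inner x ((X o\<^sub>L T) y)"
      using K.proj_self_adj[of x y] by (simp add: XS STx inner_diff_left inner_diff_right)
  qed
  have p4: "adj (T o\<^sub>L X) = T o\<^sub>L X"
  proof (rule adj_eqI)
    fix x y
    show "inner ((T o\<^sub>L X) x) y = inner x ((T o\<^sub>L X) y)"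
      using R.proj_self_adj[of x y] by (simp add: XS TS)
  qed
  show ?thesis using p1 p2 p3 p4 by blast
qed

lemma mp_penrose:
  fixes T :: "'a::{real_inner,complete_space} \<Rightarrow>\<^sub>L 'a"
  assumes "closed_range T"
  shows "penrose T (mp_inv T)"
proof -
  obtain X where "penrose T X" using mp_exists[OF assms] by blast
  moreover then have "mp_inv T = X" by (rule mp_inv_eqI)
  ultimately show ?thesis by simp
qed


lemma op_pow_0: "op_pow T 0 = id_blinfun"
  unfolding op_pow_def by simp

lemma op_pow_Suc: "op_pow T (Suc n) = T o\<^sub>L op_pow T n"
  unfolding op_pow_def by simp

lemma op_pow_Suc': "op_pow T (Suc n) = op_pow T n o\<^sub>L T"
proof (induction n)
  case 0 then show ?case by (intro blinfun_eqI) (simp add: op_pow_Suc op_pow_0)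
next
  case (Suc n)
  have "op_pow T (Suc (Suc n)) = T o\<^sub>L op_pow T (Suc n)" by (rule op_pow_Suc)
  also have "\<dots> = T o\<^sub>L (op_pow T n o\<^sub>L T)" using Suc by simp
  also have "\<dots> = (T o\<^sub>L op_pow T n) o\<^sub>L T" by (simp add: comp_assoc)
  also have "\<dots> = op_pow T (Suc n) o\<^sub>L T" by (simp add: op_pow_Suc)
  finally show ?case .
qed

lemma adj_op_pow:
  fixes T :: "'a::{real_inner,complete_space} \<Rightarrow>\<^sub>L 'a"
  shows "adj (op_pow T n) = op_pow (adj T) n"
proof (induction n)
  case 0 then show ?case by (simp add: op_pow_0)
next
  case (Suc n)
  have "adj (op_pow T (Suc n)) = adj (op_pow T n) o\<^sub>L adj T" by (simp add: op_pow_Suc adj_comp)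
  also have "\<dots> = op_pow (adj T) (Suc n)" using Suc by (simp add: op_pow_Suc')
  finally show ?case .
qed

locale cr_op =
  fixes T :: "'a::{real_inner,complete_space} \<Rightarrow>\<^sub>L 'a"
  assumes cr: "closed_range T"
begin

abbreviation "D \<equiv> mp_inv T"
abbreviation "A \<equiv> adj T"

lemma ap: "F = G \<Longrightarrow> blinfun_apply F x = blinfun_apply G x" by simp

lemma pen: "penrose T D" by (rule mp_penrose[OF cr])

lemma p1: "T o\<^sub>L D o\<^sub>L T = T" using pen by blast
lemma p2: "D o\<^sub>L T o\<^sub>L D = D" using pen by blast
lemma p3: "adj (D o\<^sub>L T) = D o\<^sub>L T" using pen by blast
lemma p4: "adj (T o\<^sub>L D) = T o\<^sub>L D" using pen by blast

lemma r1[simp]: "T (D (T x)) = T x"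
  using arg_cong[OF p1, of "\<lambda>F. blinfun_apply F x"] by simp

lemma r2[simp]: "D (T (D x)) = D x"
  using arg_cong[OF p2, of "\<lambda>F. blinfun_apply F x"] by simp

lemma r4: "A (adj D x) = D (T x)"
proof -
  have "A o\<^sub>L adj D = D o\<^sub>L T" using p3 by (simp add: adj_comp)
  from ap[OF this, of x] show ?thesis by (simp only: blinfun_apply_blinfun_compose)
qed

lemma r5: "adj D (A x) = T (D x)"
proof -
  have "adj D o\<^sub>L A = T o\<^sub>L D" using p4 by (simp add: adj_comp)
  from ap[OF this, of x] show ?thesis by (simp only: blinfun_apply_blinfun_compose)
qed

lemma r3: "D (T (A x)) = A x"
proof -
  have "A = adj (T o\<^sub>L (D o\<^sub>L T))" using p1 by (simp add: comp_assoc)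
  also have "\<dots> = D o\<^sub>L T o\<^sub>L A" by (rule trans[OF adj_comp]) (simp only: p3)
  finally have "D o\<^sub>L T o\<^sub>L A = A" by (rule sym)
  from ap[OF this, of x] show ?thesis by (simp only: blinfun_apply_blinfun_compose)
qed

lemma r7: "A (T (D x)) = A x"
proof -
  have "A = adj (T o\<^sub>L D o\<^sub>L T)" using p1 by simp
  also have "\<dots> = A o\<^sub>L T o\<^sub>L D" by (rule trans[OF adj_comp]) (simp only: p4 comp_assoc)
  finally have "A o\<^sub>L T o\<^sub>L D = A" by (rule sym)
  from ap[OF this, of x] show ?thesis by (simp only: blinfun_apply_blinfun_compose)
qed

lemma r6: "adj D (D (T x)) = adj D x"
proof -
  have "D = A o\<^sub>L adj D o\<^sub>L D"
    by (rule blinfun_eqI) (simp add: r4)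
  then have "adj D = adj (A o\<^sub>L adj D o\<^sub>L D)" by simp
  also have "\<dots> = adj D o\<^sub>L D o\<^sub>L T" by (simp add: adj_comp comp_assoc)
  finally have "adj D o\<^sub>L D o\<^sub>L T = adj D" by (rule sym)
  from ap[OF this, of x] show ?thesis by (simp only: blinfun_apply_blinfun_compose)
qed

lemma DT_sa: "inner (D (T a)) b = inner a (D (T b))"
proof -
  have "inner ((D o\<^sub>L T) a) b = inner a (adj (D o\<^sub>L T) b)" by (rule adj_inner)
  then show ?thesis using p3 by simp
qed

lemma mp_AT: "mp_inv (A o\<^sub>L T) = D o\<^sub>L adj D"
proof (rule mp_inv_eqI, intro conjI)
  show "A o\<^sub>L T o\<^sub>L (D o\<^sub>L adj D) o\<^sub>L (A o\<^sub>L T) = A o\<^sub>L T"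
    by (rule blinfun_eqI) (simp add: r5)
  show "D o\<^sub>L adj D o\<^sub>L (A o\<^sub>L T) o\<^sub>L (D o\<^sub>L adj D) = D o\<^sub>L adj D"
    by (rule blinfun_eqI) (simp add: r5)
  have ZM: "D o\<^sub>L adj D o\<^sub>L (A o\<^sub>L T) = D o\<^sub>L T"
    by (rule blinfun_eqI) (simp add: r5)
  show "adj (D o\<^sub>L adj D o\<^sub>L (A o\<^sub>L T)) = D o\<^sub>L adj D o\<^sub>L (A o\<^sub>L T)"
    unfolding ZM by (rule p3)
  have MZ: "A o\<^sub>L T o\<^sub>L (D o\<^sub>L adj D) = D o\<^sub>L T"
    by (rule blinfun_eqI) (simp add: r7 r4)
  show "adj (A o\<^sub>L T o\<^sub>L (D o\<^sub>L adj D)) = A o\<^sub>L T o\<^sub>L (D o\<^sub>L adj D)"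
    unfolding MZ by (rule p3)
qed

lemma omega: "cauchy_dual T x = adj D x"
proof -
  have "cauchy_dual T x = T (D (adj D x))" unfolding cauchy_dual_def mp_AT by simp
  also have "\<dots> = adj D (A (adj D x))" by (simp add: r5)
  also have "\<dots> = adj D x" by (simp add: r4 r6)
  finally show ?thesis .
qed

end


context cr_op
begin

definition "Q n \<longleftrightarrow> (\<forall>z. op_pow T n z = D (T (op_pow T n z)))"

lemma c1: "range (blinfun_apply (op_pow T n)) \<subseteq> range (blinfun_apply A) \<longleftrightarrow> Q n"
  unfolding Q_def
proof (intro iffI allI subsetI)
  fix z assume h: "range (blinfun_apply (op_pow T n)) \<subseteq> range (blinfun_apply A)"
  have "op_pow T n z \<in> range (blinfun_apply A)" using h by (rule subsetD) (rule rangeI)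
  then obtain u where u: "op_pow T n z = A u" by (rule rangeE)
  show "op_pow T n z = D (T (op_pow T n z))" unfolding u by (rule r3[symmetric])
next
  fix y assume h: "\<forall>z. op_pow T n z = D (T (op_pow T n z))" and y: "y \<in> range (blinfun_apply (op_pow T n))"
  from y obtain z where z: "y = op_pow T n z" by (rule rangeE)
  have "y = A (adj D y)" unfolding r4 using h z by simp
  then show "y \<in> range (blinfun_apply A)" by (rule ssubst) (rule rangeI)
qed

lemma c2: "op_pow T n = D o\<^sub>L op_pow T (n+1) \<longleftrightarrow> Q n"
  unfolding Q_def
proof
  assume h: "op_pow T n = D o\<^sub>L op_pow T (n+1)"
  show "\<forall>z. op_pow T n z = D (T (op_pow T n z))"
  proof
    fix z show "op_pow T n z = D (T (op_pow T n z))"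
      using ap[OF h, of z] by (simp add: op_pow_Suc)
  qed
next
  assume h: "\<forall>z. op_pow T n z = D (T (op_pow T n z))"
  show "op_pow T n = D o\<^sub>L op_pow T (n+1)"
    by (rule blinfun_eqI) (simp add: op_pow_Suc h[rule_format, symmetric])
qed

lemma c3:
  assumes n: "n \<ge> 1"
  shows "op_pow T n o\<^sub>L D = D o\<^sub>L op_pow T (n+1) o\<^sub>L D \<longleftrightarrow> Q n"
  unfolding Q_def
proof
  obtain m where m: "n = Suc m" using n by (cases n) auto
  have Tn: "op_pow T n w = op_pow T m (T w)" for w unfolding m op_pow_Suc' by simp
  assume h: "op_pow T n o\<^sub>L D = D o\<^sub>L op_pow T (n+1) o\<^sub>L D"
  show "\<forall>z. op_pow T n z = D (T (op_pow T n z))"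
  proof
    fix z
    have e: "op_pow T n (D (T z)) = D (op_pow T (n+1) (D (T z)))"
      using ap[OF h, of "T z"] by simp
    have e1: "op_pow T n (D (T z)) = op_pow T n z" unfolding Tn by simp
    have e2: "op_pow T (n+1) (D (T z)) = T (op_pow T n z)"
      unfolding Suc_eq_plus1[symmetric] op_pow_Suc by (simp add: e1)
    show "op_pow T n z = D (T (op_pow T n z))" using e unfolding e1 e2 .
  qed
next
  assume h: "\<forall>z. op_pow T n z = D (T (op_pow T n z))"
  show "op_pow T n o\<^sub>L D = D o\<^sub>L op_pow T (n+1) o\<^sub>L D"
    by (rule blinfun_eqI) (simp add: op_pow_Suc h[rule_format, symmetric])
qed

lemma Q_blinfun: "Q n \<longleftrightarrow> op_pow T n = (D o\<^sub>L T) o\<^sub>L op_pow T n"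
  unfolding Q_def
proof
  assume h: "\<forall>z. op_pow T n z = D (T (op_pow T n z))"
  show "op_pow T n = (D o\<^sub>L T) o\<^sub>L op_pow T n"
    by (rule blinfun_eqI) (simp add: h[rule_format, symmetric])
next
  assume h: "op_pow T n = (D o\<^sub>L T) o\<^sub>L op_pow T n"
  show "\<forall>z. op_pow T n z = D (T (op_pow T n z))"
  proof
    fix z show "op_pow T n z = D (T (op_pow T n z))" using ap[OF h, of z] by simp
  qed
qed

lemma adj_inj: "adj X = adj Y \<longleftrightarrow> X = (Y :: 'a \<Rightarrow>\<^sub>L 'a)"
  by (metis adj_adj)

lemma c4: "op_pow A n = op_pow A n o\<^sub>L D o\<^sub>L T \<longleftrightarrow> Q n"
proof -
  have "Q n \<longleftrightarrow> adj (op_pow T n) = adj ((D o\<^sub>L T) o\<^sub>L op_pow T n)"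
    unfolding Q_blinfun adj_inj ..
  also have "\<dots> \<longleftrightarrow> op_pow A n = op_pow A n o\<^sub>L (D o\<^sub>L T)"
    by (simp only: adj_op_pow adj_comp[of "D o\<^sub>L T" "op_pow T n"] p3)
  finally show ?thesis by (simp add: comp_assoc)
qed

lemma KC_Q:
  assumes kc: "\<And>x. T x = 0 \<Longrightarrow> op_pow A n x = 0"
  shows "Q n"
  unfolding Q_def
proof
  fix z
  define y where "y = op_pow T n z"
  define w where "w = y - D (T y)"
  have Tw: "T w = 0" unfolding w_def by (simp add: blinfun.diff_right)
  then have Anw: "op_pow A n w = 0" by (rule kc)
  have DTw: "D (T w) = 0" using Tw by simp
  have "inner w w = inner y w - inner (D (T y)) w" unfolding w_def by (simp add: inner_diff_left)
  also have "inner (D (T y)) w = 0" unfolding DT_sa DTw by simp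
  also have "inner y w = inner z (op_pow A n w)"
    unfolding y_def adj_inner adj_op_pow ..
  finally have "inner w w = 0" using Anw by simp
  then have "w = 0" by simp
  then show "op_pow T n z = D (T (op_pow T n z))" unfolding w_def y_def by simp
qed

lemma c5: "(\<exists>c\<ge>0. \<forall>x. norm (op_pow A n x) \<le> c * norm (T x)) \<longleftrightarrow> Q n"
proof
  assume "\<exists>c\<ge>0. \<forall>x. norm (op_pow A n x) \<le> c * norm (T x)"
  then obtain c where c: "\<And>x. norm (op_pow A n x) \<le> c * norm (T x)" by blast
  show "Q n"
  proof (rule KC_Q)
    fix x assume "T x = 0"
    then show "op_pow A n x = 0" using c[of x] by simp
  qed
next
  assume "Q n"
  then have h: "op_pow A n = op_pow A n o\<^sub>L D o\<^sub>L T" using c4 by simp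
  show "\<exists>c\<ge>0. \<forall>x. norm (op_pow A n x) \<le> c * norm (T x)"
  proof (intro exI[of _ "norm (op_pow A n o\<^sub>L D)"] conjI allI)
    show "0 \<le> norm (op_pow A n o\<^sub>L D)" by simp
    fix x
    have "op_pow A n x = (op_pow A n o\<^sub>L D) (T x)" using ap[OF h, of x] by simp
    then show "norm (op_pow A n x) \<le> norm (op_pow A n o\<^sub>L D) * norm (T x)"
      using norm_blinfun[of "op_pow A n o\<^sub>L D" "T x"] by simp
  qed
qed

lemma c6: "(\<exists>c\<ge>0. \<forall>x. norm (op_pow A n x) \<le> c * norm (cauchy_dual T x)) \<longleftrightarrow> Q n"
proof
  assume "\<exists>c\<ge>0. \<forall>x. norm (op_pow A n x) \<le> c * norm (cauchy_dual T x)"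
  then obtain c where c: "\<And>x. norm (op_pow A n x) \<le> c * norm (cauchy_dual T x)" by blast
  show "Q n"
  proof (rule KC_Q)
    fix x assume Tx: "T x = 0"
    have "cauchy_dual T x = adj D (D (T x))" by (simp add: omega r6)
    also have "\<dots> = 0" using Tx by simp
    finally show "op_pow A n x = 0" using c[of x] by simp
  qed
next
  assume "Q n"
  then have h: "op_pow A n = op_pow A n o\<^sub>L D o\<^sub>L T" using c4 by simp
  show "\<exists>c\<ge>0. \<forall>x. norm (op_pow A n x) \<le> c * norm (cauchy_dual T x)"
  proof (intro exI[of _ "norm (op_pow A n o\<^sub>L A)"] conjI allI)
    show "0 \<le> norm (op_pow A n o\<^sub>L A)" by simp
    fix x
    have "op_pow A n x = op_pow A n (D (T x))" using ap[OF h, of x] by simp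
    also have "\<dots> = (op_pow A n o\<^sub>L A) (cauchy_dual T x)" by (simp add: omega r4)
    finally show "norm (op_pow A n x) \<le> norm (op_pow A n o\<^sub>L A) * norm (cauchy_dual T x)"
      using norm_blinfun[of "op_pow A n o\<^sub>L A" "cauchy_dual T x"] by simp
  qed
qed

lemma hypo: "hypo_EP n T \<longleftrightarrow> Q n"
  unfolding hypo_EP_def c1 using cr by simp

end

theorem mainTheorem13:
  fixes T :: "'a::{real_inner,complete_space} \<Rightarrow>\<^sub>L 'a" and n :: nat
  assumes "closed_range T" and "n \<ge> 1"
  shows "(hypo_EP n T \<longleftrightarrow> op_pow T n = mp_inv T o\<^sub>L op_pow T (n+1))
       \<and> (hypo_EP n T \<longleftrightarrow> op_pow T n o\<^sub>L mp_inv T = mp_inv T o\<^sub>L op_pow T (n+1) o\<^sub>L mp_inv T)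
       \<and> (hypo_EP n T \<longleftrightarrow> op_pow (adj T) n = op_pow (adj T) n o\<^sub>L mp_inv T o\<^sub>L T)
       \<and> (hypo_EP n T \<longleftrightarrow> (\<exists>c\<ge>0. \<forall>x. norm (op_pow (adj T) n x) \<le> c * norm (T x)))
       \<and> (hypo_EP n T \<longleftrightarrow> (\<exists>c\<ge>0. \<forall>x. norm (op_pow (adj T) n x) \<le> c * norm (cauchy_dual T x)))"
proof -
  interpret cr_op T by unfold_locales (rule assms(1))
  show ?thesis
    unfolding hypo c2 c3[OF assms(2)] c4 c5 c6 by simp
qed


end
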